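(* Let $K\ge 2$, let $\Delta^K\subset\mathbb{R}^K$ be the probability simplex, and identify outcomes $Y$ with one-hot vectors in $\mathbb{R}^K$. Let $\mu_t\in\Delta^K$, $\mu_t^*\in\Delta^K$, $c_t\in\mathbb{R}_+^K$ with $\mu_t+c_t\in[0,1]^K$ and $\mu_t-c_t\in[0,1]^K$. Let $a_t$ be an action and $l_t$ a loss; write $l\in\mathbb{R}^K$ for the vector $l_i=l_t(a_t,Y=i)$. Define $$L_t^{\max}=\max_{\tilde\mu\in\Delta^K,\ \tilde\mu\in[\mu_t-c_t,\mu_t+c_t]}\mathbb{E}_{Y\sim\tilde\mu}[l_t(a_t,Y)],\qquad L_t^*=\mathbb{E}_{Y\sim\mu_t^*}[l_t(a_t,Y)],$$ (where $\tilde\mu\in[\mu_t-c_t,\mu_t+c_t]$ is coordinatewise), and for $g_t\in\mathbb{R}^K$, $$L_t^{\mathrm{pay}}=L_t^*+\mathbb{E}_{Y\sim\mu_t^*}\big[\langle g_t,\mu_t-Y\rangle+\langle|g_t|,c_t\rangle\big],$$ with $|g_t|$ taken coordinatewise. Let $\gamma^*\in\mathbb{R}$ attain $\inf_{\gamma\in\mathbb{R}}\langle c_t,|l-\gamma\mathbf{1}|\rangle$. If $g_t=l-\gamma^*\mathbf{1}$, then $L_t^{\mathrm{pay}}=L_t^{\max}$.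
   Context: $\mathbf{1}$ denotes the all-ones vector in $\mathbb{R}^K$ and $|v|$ for a vector $v$ denotes the coordinatewise absolute value. *)

theory Defs
  imports "HOL-Analysis.Analysis"
begin

definition prob_simplex :: "(real ^ 'k::finite) set" where
  "prob_simplex = {x. (\<forall>i. 0 \<le> x $ i) \<and> (\<Sum>i\<in>UNIV. x $ i) = 1}"

definition onehot :: "'k::finite \<Rightarrow> real ^ 'k" where
  "onehot i = axis i 1"

definition expect :: "real ^ 'k::finite \<Rightarrow> ('k \<Rightarrow> real) \<Rightarrow> real" where
  "expect mu f = (\<Sum>i\<in>UNIV. mu $ i * f i)"

definition vabs :: "real ^ 'k::finite \<Rightarrow> real ^ 'k" where
  "vabs v = (\<chi> i. \<bar>v $ i\<bar>)"

definition L_max :: "real ^ 'k::finite \<Rightarrow> real ^ 'k \<Rightarrow> ('k \<Rightarrow> real) \<Rightarrow> real" where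
  "L_max mu c loss = Sup {expect mt loss | mt. mt \<in> prob_simplex \<and>
      (\<forall>i. mu $ i - c $ i \<le> mt $ i \<and> mt $ i \<le> mu $ i + c $ i)}"

definition L_star :: "real ^ 'k::finite \<Rightarrow> ('k \<Rightarrow> real) \<Rightarrow> real" where
  "L_star mustar loss = expect mustar loss"

definition L_pay :: "real ^ 'k::finite \<Rightarrow> real ^ 'k \<Rightarrow> real ^ 'k \<Rightarrow> real ^ 'k
     \<Rightarrow> ('k \<Rightarrow> real) \<Rightarrow> real" where
  "L_pay mu mustar c g loss = L_star mustar loss +
     expect mustar (\<lambda>y. g \<bullet> (mu - onehot y) + vabs g \<bullet> c)"

end

theory Submission
  imports Defs
begin

theorem proposition3:
  fixes mu mustar c g :: "real ^ 'k::finite"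
    and lt :: "'a \<Rightarrow> 'k \<Rightarrow> real" and a :: 'a
    and gamma :: real
  assumes "CARD('k) \<ge> 2"
    and "mu \<in> prob_simplex" and "mustar \<in> prob_simplex"
    and "\<forall>i. 0 \<le> c $ i"
    and "\<forall>i. 0 \<le> mu $ i + c $ i \<and> mu $ i + c $ i \<le> 1"
    and "\<forall>i. 0 \<le> mu $ i - c $ i \<and> mu $ i - c $ i \<le> 1"
    and "\<forall>gam. c \<bullet> vabs ((\<chi> i. lt a i) - gamma *\<^sub>R 1)
                 \<le> c \<bullet> vabs ((\<chi> i. lt a i) - gam *\<^sub>R 1)"
    and "g = (\<chi> i. lt a i) - gamma *\<^sub>R 1"
  shows "L_pay mu mustar c g (lt a) = L_max mu c (lt a)"
proof -
  define l where "l = lt a"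
  define f where "f gam = (\<Sum>i\<in>UNIV. c$i * \<bar>l i - gam\<bar>)" for gam
  have fe: "c \<bullet> vabs ((\<chi> i. lt a i) - gam *\<^sub>R 1) = f gam" for gam
    by (simp add: f_def inner_vec_def vabs_def l_def)
  have opt: "f gamma \<le> f gam" for gam using assms(7) fe by metis
  have mu1: "(\<Sum>i\<in>UNIV. mu$i) = 1" and mus1: "(\<Sum>i\<in>UNIV. mustar$i) = 1"
    using assms(2,3) by (auto simp: prob_simplex_def)
  define V where "V = (\<Sum>i\<in>UNIV. mu$i * l i)"
  have gi: "g $ i = l i - gamma" for i using assms(8) by (simp add: l_def)
  have pay: "L_pay mu mustar c g (lt a) = V + f gamma"
  proof -
    define K where "K = g \<bullet> mu + vabs g \<bullet> c"
    have K: "K = V - gamma + f gamma"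
    proof -
      have "g \<bullet> mu = (\<Sum>i\<in>UNIV. mu$i * l i - gamma * mu$i)"
        by (simp add: inner_vec_def gi algebra_simps)
      also have "\<dots> = V - gamma" by (simp add: sum_subtractf V_def mu1 flip: sum_distrib_left)
      finally show ?thesis
        by (simp add: K_def inner_vec_def vabs_def gi f_def mult.commute)
    qed
    have "expect mustar (\<lambda>y. g \<bullet> (mu - onehot y) + vabs g \<bullet> c)
        = (\<Sum>y\<in>UNIV. mustar$y * K - mustar$y * (l y - gamma))"
      unfolding expect_def by (rule sum.cong) (auto simp: onehot_def K_def inner_diff_right
          inner_axis gi algebra_simps)
    also have "\<dots> = K - (\<Sum>y\<in>UNIV. mustar$y * l y) + gamma"
      by (simp add: sum_subtractf right_diff_distrib mus1 flip: sum_distrib_left sum_distrib_right)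
    finally show ?thesis
      by (simp add: L_pay_def L_star_def expect_def K l_def)
  qed
  define A where "A = (\<Sum>i\<in>UNIV. if l i > gamma then c$i else 0)"
  define B where "B = (\<Sum>i\<in>UNIV. if l i < gamma then c$i else 0)"
  define E where "E = (\<Sum>i\<in>UNIV. if l i = gamma then c$i else 0)"
  define D where "D = {\<bar>l i - gamma\<bar> | i. l i \<noteq> gamma} \<union> {1}"
  define eps where "eps = Min D"
  have finD: "finite D" unfolding D_def by simp
  have epspos: "eps > 0" unfolding eps_def using finD
    by (subst Min_gr_iff) (auto simp: D_def)
  have epsle: "eps \<le> \<bar>l i - gamma\<bar>" if "l i \<noteq> gamma" for i
    unfolding eps_def using finD that by (intro Min_le) (auto simp: D_def)
  have fplus: "f (gamma + eps) = f gamma + eps * (B + E - A)"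
  proof -
    have "c$i * \<bar>l i - (gamma + eps)\<bar> = c$i * \<bar>l i - gamma\<bar>
       + eps * ((if l i < gamma then c$i else 0) + (if l i = gamma then c$i else 0)
       - (if l i > gamma then c$i else 0))" for i
    proof -
      consider "l i > gamma" | "l i < gamma" | "l i = gamma" by linarith
      then show ?thesis
      proof cases
        case 1 with epsle[of i] have "\<bar>l i - (gamma + eps)\<bar> = \<bar>l i - gamma\<bar> - eps" by auto
        with 1 show ?thesis by (simp add: algebra_simps)
      next
        case 2 with epspos have "\<bar>l i - (gamma + eps)\<bar> = \<bar>l i - gamma\<bar> + eps" by auto
        with 2 show ?thesis by (simp add: algebra_simps)
      next
        case 3 with epspos show ?thesis by (simp add: algebra_simps)
      qed
    qed
    then show ?thesis
      by (simp add: f_def A_def B_def E_def sum.distrib sum_subtractf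
          flip: sum_distrib_left)
  qed
  have fminus: "f (gamma - eps) = f gamma + eps * (A + E - B)"
  proof -
    have "c$i * \<bar>l i - (gamma - eps)\<bar> = c$i * \<bar>l i - gamma\<bar>
       + eps * ((if l i > gamma then c$i else 0) + (if l i = gamma then c$i else 0)
       - (if l i < gamma then c$i else 0))" for i
    proof -
      consider "l i > gamma" | "l i < gamma" | "l i = gamma" by linarith
      then show ?thesis
      proof cases
        case 2 with epsle[of i] have "\<bar>l i - (gamma - eps)\<bar> = \<bar>l i - gamma\<bar> - eps" by auto
        with 2 show ?thesis by (simp add: algebra_simps)
      next
        case 1 with epspos have "\<bar>l i - (gamma - eps)\<bar> = \<bar>l i - gamma\<bar> + eps" by auto
        with 1 show ?thesis by (simp add: algebra_simps)
      next
        case 3 with epspos show ?thesis by (simp add: algebra_simps)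
      qed
    qed
    then show ?thesis
      by (simp add: f_def A_def B_def E_def sum.distrib sum_subtractf
          flip: sum_distrib_left)
  qed
  have c1: "B + E - A \<ge> 0" using opt[of "gamma + eps"] fplus epspos
    by (simp add: zero_le_mult_iff)
  have c2: "A + E - B \<ge> 0" using opt[of "gamma - eps"] fminus epspos
    by (simp add: zero_le_mult_iff)
  define r where "r = (B - A) / E"
  define d where "d i = (if l i > gamma then c$i else 0) - (if l i < gamma then c$i else 0)
      + (if l i = gamma then c$i else 0) * r" for i
  define mt where "mt = (\<chi> i. mu$i + d i)"
  have Epos: "E \<ge> 0" unfolding E_def using assms(4) by (intro sum_nonneg) auto
  have rle: "\<bar>r\<bar> \<le> 1"
  proof (cases "E = 0")
    case True then show ?thesis by (simp add: r_def)
  next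
    case False with Epos have "E > 0" by simp
    then show ?thesis using c1 c2 by (simp add: r_def abs_le_iff divide_le_eq_1 )
  qed
  have dsum: "(\<Sum>i\<in>UNIV. d i) = 0"
  proof -
    have "(\<Sum>i\<in>UNIV. d i) = A - B + E * r"
      by (simp add: d_def A_def B_def E_def sum.distrib sum_subtractf sum_distrib_right)
    also have "\<dots> = 0"
    proof (cases "E = 0")
      case True then show ?thesis using c1 c2 by simp
    next
      case False then show ?thesis by (simp add: r_def)
    qed
    finally show ?thesis .
  qed
  have dbox: "\<bar>d i\<bar> \<le> c$i" for i
  proof -
    have "\<bar>c$i * r\<bar> \<le> c$i" using rle assms(4)
      by (simp add: abs_mult mult_left_le)
    then show ?thesis using assms(4) by (auto simp: d_def)
  qed
  have dval: "(\<Sum>i\<in>UNIV. d i * (l i - gamma)) = f gamma"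
    unfolding f_def by (rule sum.cong) (auto simp: d_def algebra_simps)
  define S where "S = {expect m (lt a) | m. m \<in> prob_simplex \<and>
      (\<forall>i. mu $ i - c $ i \<le> m $ i \<and> m $ i \<le> mu $ i + c $ i)}"
  have "expect mt (lt a) \<in> S"
    unfolding S_def
  proof (intro CollectI exI conjI)
    show "mt \<in> prob_simplex"
      unfolding prob_simplex_def
    proof (intro CollectI conjI allI)
      fix i show "0 \<le> mt $ i" using dbox[of i] assms(6) by (simp add: mt_def abs_le_iff) (smt (verit))
    next
      show "(\<Sum>i\<in>UNIV. mt $ i) = 1" by (simp add: mt_def sum.distrib mu1 dsum)
    qed
    show "\<forall>i. mu $ i - c $ i \<le> mt $ i \<and> mt $ i \<le> mu $ i + c $ i"
    proof
      fix i show "mu $ i - c $ i \<le> mt $ i \<and> mt $ i \<le> mu $ i + c $ i"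
        using dbox[of i] by (simp add: mt_def abs_le_iff)
    qed
  qed simp
  moreover have "expect mt (lt a) = V + f gamma"
  proof -
    have "expect mt (lt a) = V + (\<Sum>i\<in>UNIV. d i * l i)"
      by (simp add: expect_def mt_def V_def l_def distrib_right sum.distrib)
    also have "(\<Sum>i\<in>UNIV. d i * l i) = (\<Sum>i\<in>UNIV. d i * (l i - gamma))"
      by (simp add: right_diff_distrib sum_subtractf dsum flip: sum_distrib_right)
    finally show ?thesis using dval by simp
  qed
  moreover have "x \<le> V + f gamma" if "x \<in> S" for x
  proof -
    from that obtain m where m: "m \<in> prob_simplex"
      "\<forall>i. mu $ i - c $ i \<le> m $ i \<and> m $ i \<le> mu $ i + c $ i" and x: "x = expect m (lt a)"
      unfolding S_def by blast
    have m1: "(\<Sum>i\<in>UNIV. m$i) = 1" using m(1) by (simp add: prob_simplex_def)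
    have "x = V + (\<Sum>i\<in>UNIV. (m$i - mu$i) * l i)"
      by (simp add: x expect_def V_def l_def left_diff_distrib sum_subtractf)
    also have "(\<Sum>i\<in>UNIV. (m$i - mu$i) * l i) = (\<Sum>i\<in>UNIV. (m$i - mu$i) * (l i - gamma))"
      by (simp add: right_diff_distrib sum_subtractf m1 mu1 flip: sum_distrib_right)
    also have "\<dots> \<le> f gamma" unfolding f_def
    proof (rule sum_mono)
      fix i
      have "(m$i - mu$i) * (l i - gamma) \<le> \<bar>m$i - mu$i\<bar> * \<bar>l i - gamma\<bar>"
        by (metis abs_ge_self abs_mult)
      also have "\<dots> \<le> c$i * \<bar>l i - gamma\<bar>"
        using m(2)[rule_format, of i] by (intro mult_right_mono) (auto simp: abs_le_iff)
      finally show "(m$i - mu$i) * (l i - gamma) \<le> c$i * \<bar>l i - gamma\<bar>" .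
    qed
    finally show ?thesis by simp
  qed
  ultimately have "Sup S = V + f gamma" by (intro cSup_eq_maximum) auto
  then show ?thesis using pay by (simp add: L_max_def S_def)
qed

end
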